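(* Let $(X,d)$ be a compact metric space and let $f_{1,\infty}=(f_n)_{n=1}^\infty$ be a sequence of continuous maps $f_n:X\to X$ which is either finitely generated or converges uniformly to a map $f:X\to X$. Then for every $k\in\mathbb{N}$, $(X,f_{1,\infty})$ is Kato chaotic if and only if its $k$-th iterate $(X,f_{1,\infty}^{[k]})$ is Kato chaotic.
   Context: For $i,n\in\mathbb{N}$ write $f_i^n=f_{i+n-1}\circ\cdots\circ f_i$, $f_i^0=\mathrm{id}_X$. The $k$-th iterate is $f_{1,\infty}^{[k]}=(f_{k(n-1)+1}^k)_{n=1}^\infty$, whose $n$-fold composition from index $1$ is $f_1^{kn}$. The system $f_{1,\infty}$ is finitely generated if there is a finite set $F$ of continuous self-maps of $X$ with $f_i\in F$ for all $i$. A non-autonomous system $g_{1,\infty}$ (compositions $g_1^n$) is sensitive if there is $\delta>0$ such that for every nonempty open $U\subseteq X$ there exist $x,y\in U$ and $n\in\mathbb{N}$ with $d(g_1^n(x),g_1^n(y))>\delta$; it is accessible if for every $\varepsilon>0$ and all nonempty open $U,V\subseteq X$ there exist $x\in U$, $y\in V$, $n\in\mathbb{N}$ with $d(g_1^n(x),g_1^n(y))<\varepsilon$; it is Kato chaotic if it is sensitive and accessible. *)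

theory Defs
  imports "HOL-Analysis.Analysis"
begin

text \<open>Non-autonomous systems are sequences of maps indexed from 1; the value at index 0 is ignored.
  comp_from f i n is f_i^n = f_(i+n-1) o ... o f_i, with f_i^0 = id.\<close>
fun comp_from :: "(nat \<Rightarrow> 'a \<Rightarrow> 'a) \<Rightarrow> nat \<Rightarrow> nat \<Rightarrow> 'a \<Rightarrow> 'a" where
  "comp_from f i 0 = id"
| "comp_from f i (Suc n) = f (i + n) \<circ> comp_from f i n"

definition kth_iterate :: "(nat \<Rightarrow> 'a \<Rightarrow> 'a) \<Rightarrow> nat \<Rightarrow> nat \<Rightarrow> 'a \<Rightarrow> 'a" where
  "kth_iterate f k = (\<lambda>n. comp_from f (k * (n - 1) + 1) k)"

definition finitely_generated :: "(nat \<Rightarrow> 'a::topological_space \<Rightarrow> 'a) \<Rightarrow> bool" where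
  "finitely_generated f \<longleftrightarrow> (\<exists>F. finite F \<and> (\<forall>h\<in>F. continuous_on UNIV h) \<and> (\<forall>i\<ge>1. f i \<in> F))"

definition na_sensitive :: "(nat \<Rightarrow> 'a::metric_space \<Rightarrow> 'a) \<Rightarrow> bool" where
  "na_sensitive g \<longleftrightarrow> (\<exists>\<delta>>0. \<forall>U. open U \<and> U \<noteq> {} \<longrightarrow>
      (\<exists>x\<in>U. \<exists>y\<in>U. \<exists>n\<ge>1. dist (comp_from g 1 n x) (comp_from g 1 n y) > \<delta>))"

definition na_accessible :: "(nat \<Rightarrow> 'a::metric_space \<Rightarrow> 'a) \<Rightarrow> bool" where
  "na_accessible g \<longleftrightarrow> (\<forall>\<epsilon>>0. \<forall>U V. open U \<and> U \<noteq> {} \<and> open V \<and> V \<noteq> {} \<longrightarrow>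
      (\<exists>x\<in>U. \<exists>y\<in>V. \<exists>n\<ge>1. dist (comp_from g 1 n x) (comp_from g 1 n y) < \<epsilon>))"

definition kato_chaotic :: "(nat \<Rightarrow> 'a::metric_space \<Rightarrow> 'a) \<Rightarrow> bool" where
  "kato_chaotic g \<longleftrightarrow> na_sensitive g \<and> na_accessible g"

end

theory Submission
  imports Defs
begin

lemma comp_from_add: "comp_from f i (m + n) = comp_from f (i + m) n \<circ> comp_from f i m"
  by (induction n) (auto simp: add.assoc)

lemma comp_from_kth: "comp_from (kth_iterate f k) 1 n = comp_from f 1 (k * n)"
proof (induction n)
  case 0 then show ?case by simp
next
  case (Suc n)
  have "comp_from (kth_iterate f k) 1 (Suc n) = comp_from f (k*n+1) k \<circ> comp_from f 1 (k*n)"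
    using Suc by (simp add: kth_iterate_def)
  also have "\<dots> = comp_from f 1 (k*n + k)"
    using comp_from_add[of f 1 "k*n" k] by (simp add: add.commute)
  finally show ?case by (simp add: algebra_simps)
qed

lemma finite_equi:
  fixes F :: "('a::metric_space \<Rightarrow> 'b::metric_space) set"
  assumes "finite F" "\<forall>h\<in>F. uniformly_continuous_on UNIV h"
  shows "\<forall>e>0. \<exists>d>0. \<forall>h\<in>F. \<forall>x y. dist x y < d \<longrightarrow> dist (h x) (h y) < e"
  using assms
proof (induction F rule: finite_induct)
  case empty then show ?case by (auto intro: exI[of _ 1])
next
  case (insert h F)
  show ?case
  proof (intro allI impI)
    fix e :: real assume e: "e > 0"
    obtain d1 where d1: "d1 > 0" "\<forall>h\<in>F. \<forall>x y. dist x y < d1 \<longrightarrow> dist (h x) (h y) < e"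
      using insert e by auto
    have "uniformly_continuous_on UNIV h" using insert by auto
    then obtain d2 where d2: "d2 > 0" "\<forall>x y. dist y x < d2 \<longrightarrow> dist (h y) (h x) < e"
      using e unfolding uniformly_continuous_on_def by auto
    show "\<exists>d>0. \<forall>h\<in>insert h F. \<forall>x y. dist x y < d \<longrightarrow> dist (h x) (h y) < e"
      using d1 d2 by (intro exI[of _ "min d1 d2"]) auto
  qed
qed

lemma base_equi:
  fixes f :: "nat \<Rightarrow> 'a::metric_space \<Rightarrow> 'a"
  assumes cpt: "compact (UNIV :: 'a set)"
    and cont: "\<And>n. n \<ge> 1 \<Longrightarrow> continuous_on UNIV (f n)"
    and fg: "finitely_generated f \<or> (\<exists>g. uniform_limit UNIV f g sequentially)"
  shows "\<forall>e>0. \<exists>d>0. \<forall>j\<ge>1. \<forall>x y. dist x y < d \<longrightarrow> dist (f j x) (f j y) < e"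
  using fg
proof
  assume "finitely_generated f"
  then obtain F where F: "finite F" "\<forall>h\<in>F. continuous_on UNIV h" "\<forall>i\<ge>1. f i \<in> F"
    unfolding finitely_generated_def by auto
  have "\<forall>h\<in>F. uniformly_continuous_on UNIV h"
    using F cpt compact_uniformly_continuous by blast
  note FE = finite_equi[OF F(1) this]
  show ?thesis
  proof (intro allI impI)
    fix e :: real assume "e > 0"
    then obtain d where d: "d > 0" "\<forall>h\<in>F. \<forall>x y. dist x y < d \<longrightarrow> dist (h x) (h y) < e"
      using FE by blast
    show "\<exists>d>0. \<forall>j\<ge>1. \<forall>x y. dist x y < d \<longrightarrow> dist (f j x) (f j y) < e"
    proof (intro exI[of _ d] conjI allI impI)
      fix j :: nat and x y :: 'a assume j: "1 \<le> j" and xy: "dist x y < d"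
      have "f j \<in> F" using F(3) j by blast
      then show "dist (f j x) (f j y) < e" using d(2) xy by blast
    qed (rule d(1))
  qed
next
  assume "\<exists>g. uniform_limit UNIV f g sequentially"
  then obtain g where g: "uniform_limit UNIV f g sequentially" by auto
  have "continuous_on UNIV g"
    apply (rule uniform_limit_theorem[OF _ g])
    using cont by (auto simp: eventually_sequentially)
  then have ug: "uniformly_continuous_on UNIV g" using cpt compact_uniformly_continuous by blast
  show ?thesis
  proof (intro allI impI)
    fix e :: real assume e: "e > 0"
    have "\<forall>\<^sub>F n in sequentially. \<forall>x\<in>UNIV. dist (f n x) (g x) < e/3"
      using g e unfolding uniform_limit_iff by (meson divide_pos_pos zero_less_numeral)
    then obtain N where N: "\<And>n x. n \<ge> N \<Longrightarrow> dist (f n x) (g x) < e/3"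
      unfolding eventually_sequentially by auto
    let ?F = "insert g (f ` {1..N})"
    have "\<forall>h\<in>?F. uniformly_continuous_on UNIV h"
      using ug cont[THEN compact_uniformly_continuous[OF _ cpt]] by auto
    have fin: "finite ?F" by simp
    have e3: "e/3 > 0" using e by simp
    obtain d where d: "d > 0"
      "\<forall>h\<in>?F. \<forall>x y. dist x y < d \<longrightarrow> dist (h x) (h y) < e/3"
      using finite_equi[OF fin \<open>\<forall>h\<in>?F. uniformly_continuous_on UNIV h\<close>, rule_format, OF e3] by blast
    show "\<exists>d>0. \<forall>j\<ge>1. \<forall>x y. dist x y < d \<longrightarrow> dist (f j x) (f j y) < e"
    proof (intro exI[of _ d] conjI allI impI)
      fix j :: nat and x y :: 'a assume j: "j \<ge> 1" and xy: "dist x y < d"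
      show "dist (f j x) (f j y) < e"
      proof (cases "j \<le> N")
        case True
        then have "f j \<in> ?F" using j by auto
        then have "dist (f j x) (f j y) < e/3" using d(2) xy by blast
        then show ?thesis using e by linarith
      next
        case False
        have "dist (f j x) (f j y) \<le> dist (f j x) (g x) + dist (g x) (g y) + dist (g y) (f j y)"
          using dist_triangle[of "f j x" "f j y" "g x"] dist_triangle[of "g x" "f j y" "g y"] by linarith
        moreover have "dist (f j x) (g x) < e/3" "dist (g y) (f j y) < e/3"
          using N[of j] False by (auto simp: dist_commute)
        moreover have "dist (g x) (g y) < e/3" using d xy by auto
        ultimately show ?thesis by linarith
      qed
    qed (rule d(1))
  qed
qed

lemma comp_equi:
  fixes f :: "nat \<Rightarrow> 'a::metric_space \<Rightarrow> 'a"
  assumes E: "\<forall>e>0. \<exists>d>0. \<forall>j\<ge>1. \<forall>x y. dist x y < d \<longrightarrow> dist (f j x) (f j y) < e"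
  shows "\<forall>e>0. \<exists>d>0. \<forall>r\<le>K. \<forall>j\<ge>1. \<forall>x y. dist x y < d \<longrightarrow> dist (comp_from f j r x) (comp_from f j r y) < e"
proof (induction K)
  case 0
  show ?case
  proof (intro allI impI)
    fix e :: real assume e: "e > 0"
    show "\<exists>d>0. \<forall>r\<le>0. \<forall>j\<ge>1. \<forall>x y. dist x y < d \<longrightarrow> dist (comp_from f j r x) (comp_from f j r y) < e"
    proof (intro exI[of _ e] conjI allI impI)
      fix r j :: nat and x y :: 'a assume "r \<le> 0" "dist x y < e"
      then show "dist (comp_from f j r x) (comp_from f j r y) < e" by simp
    qed (rule e)
  qed
next
  case (Suc K)
  show ?case
  proof (intro allI impI)
    fix e :: real assume e: "e > 0"
    obtain d1 where d1: "d1 > 0" "\<forall>j\<ge>1. \<forall>x y. dist x y < d1 \<longrightarrow> dist (f j x) (f j y) < e"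
      using E e by blast
    have me: "min e d1 > 0" using e d1(1) by simp
    obtain d2 where d2: "d2 > 0" "\<forall>r\<le>K. \<forall>j\<ge>1. \<forall>x y. dist x y < d2 \<longrightarrow> dist (comp_from f j r x) (comp_from f j r y) < min e d1"
      using Suc.IH[rule_format, OF me] by blast
    show "\<exists>d>0. \<forall>r\<le>Suc K. \<forall>j\<ge>1. \<forall>x y. dist x y < d \<longrightarrow> dist (comp_from f j r x) (comp_from f j r y) < e"
    proof (intro exI[of _ d2] conjI allI impI)
      fix r j :: nat and x y :: 'a assume r: "r \<le> Suc K" and j: "1 \<le> j" and xy: "dist x y < d2"
      show "dist (comp_from f j r x) (comp_from f j r y) < e"
      proof (cases "r \<le> K")
        case True
        then have "dist (comp_from f j r x) (comp_from f j r y) < min e d1"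
          using d2(2) j xy by blast
        then show ?thesis by simp
      next
        case False
        then have r': "r = Suc K" using r by simp
        have "dist (comp_from f j K x) (comp_from f j K y) < min e d1"
          using d2(2) j xy by blast
        then have "dist (comp_from f j K x) (comp_from f j K y) < d1" by simp
        moreover have "j + K \<ge> 1" using j by simp
        ultimately have "dist (f (j+K) (comp_from f j K x)) (f (j+K) (comp_from f j K y)) < e"
          using d1(2) by blast
        then show ?thesis using r' by simp
      qed
    qed (rule d2(1))
  qed
qed

theorem mainTheorem3:
  fixes f :: "nat \<Rightarrow> 'a::metric_space \<Rightarrow> 'a" and k :: nat
  assumes "compact (UNIV :: 'a set)"
    and "\<And>n. n \<ge> 1 \<Longrightarrow> continuous_on UNIV (f n)"
    and "finitely_generated f \<or> (\<exists>g. uniform_limit UNIV f g sequentially)"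
    and "k \<ge> 1"
  shows "kato_chaotic f \<longleftrightarrow> kato_chaotic (kth_iterate f k)"
proof
  assume K: "kato_chaotic (kth_iterate f k)"
  have S: "na_sensitive f"
  proof -
    obtain \<delta> where \<delta>: "\<delta> > 0" "\<forall>U. open U \<and> U \<noteq> {} \<longrightarrow>
      (\<exists>x\<in>U. \<exists>y\<in>U. \<exists>n\<ge>1. dist (comp_from (kth_iterate f k) 1 n x) (comp_from (kth_iterate f k) 1 n y) > \<delta>)"
      using K unfolding kato_chaotic_def na_sensitive_def by auto
    show ?thesis unfolding na_sensitive_def
    proof (intro exI[of _ \<delta>] conjI allI impI)
      fix U :: "'a set" assume "open U \<and> U \<noteq> {}"
      from \<delta>(2)[rule_format, OF this] obtain x y n where "x \<in> U" "y \<in> U" "n \<ge> 1"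
        "dist (comp_from (kth_iterate f k) 1 n x) (comp_from (kth_iterate f k) 1 n y) > \<delta>"
        by blast
      then have "dist (comp_from f 1 (k*n) x) (comp_from f 1 (k*n) y) > \<delta>"
        by (simp only: comp_from_kth)
      moreover have "k * n \<ge> 1" using \<open>n \<ge> 1\<close> assms(4) by simp
      ultimately show "\<exists>x\<in>U. \<exists>y\<in>U. \<exists>n\<ge>1. dist (comp_from f 1 n x) (comp_from f 1 n y) > \<delta>"
        using \<open>x \<in> U\<close> \<open>y \<in> U\<close> by blast
    qed (use \<delta> in auto)
  qed
  have A: "na_accessible f"
    unfolding na_accessible_def
  proof (intro allI impI)
    fix e :: real and U V :: "'a set"
    assume "e > 0" "open U \<and> U \<noteq> {} \<and> open V \<and> V \<noteq> {}"
    then obtain x y n where "x \<in> U" "y \<in> V" "n \<ge> 1"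
        "dist (comp_from (kth_iterate f k) 1 n x) (comp_from (kth_iterate f k) 1 n y) < e"
      using K unfolding kato_chaotic_def na_accessible_def by blast
    then have "dist (comp_from f 1 (k*n) x) (comp_from f 1 (k*n) y) < e"
      by (simp only: comp_from_kth)
    moreover have "k * n \<ge> 1" using \<open>n \<ge> 1\<close> assms(4) by simp
    ultimately show "\<exists>x\<in>U. \<exists>y\<in>V. \<exists>n\<ge>1. dist (comp_from f 1 n x) (comp_from f 1 n y) < e"
      using \<open>x \<in> U\<close> \<open>y \<in> V\<close> by blast
  qed
  show "kato_chaotic f" using S A unfolding kato_chaotic_def by auto
next
  assume K: "kato_chaotic f"
  have EQ: "\<forall>e>0. \<exists>d>0. \<forall>r\<le>k. \<forall>j\<ge>1. \<forall>x y. dist x y < d \<longrightarrow> dist (comp_from f j r x) (comp_from f j r y) < e"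
    using comp_equi[OF base_equi[OF assms(1-3)]] by blast
  have S: "na_sensitive (kth_iterate f k)"
  proof -
    obtain \<delta> where \<delta>: "\<delta> > 0" "\<forall>U. open U \<and> U \<noteq> {} \<longrightarrow>
      (\<exists>x\<in>U. \<exists>y\<in>U. \<exists>n\<ge>1. dist (comp_from f 1 n x) (comp_from f 1 n y) > \<delta>)"
      using K unfolding kato_chaotic_def na_sensitive_def by auto
    obtain \<eta> where \<eta>: "\<eta> > 0" "\<forall>r\<le>k. \<forall>j\<ge>1. \<forall>x y. dist x y < \<eta> \<longrightarrow> dist (comp_from f j r x) (comp_from f j r y) < \<delta>"
      using EQ \<delta>(1) by blast
    show ?thesis unfolding na_sensitive_def
    proof (intro exI[of _ "\<eta>/2"] conjI allI impI)
      fix U :: "'a set" assume U: "open U \<and> U \<noteq> {}"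
      then obtain u where "u \<in> U" by auto
      then obtain \<rho> where \<rho>: "\<rho> > 0" "ball u \<rho> \<subseteq> U" using U open_contains_ball by blast
      define \<rho>' where "\<rho>' = min \<rho> (\<eta>/2)"
      have \<rho>': "\<rho>' > 0" "ball u \<rho>' \<subseteq> U" using \<rho> \<eta> unfolding \<rho>'_def by auto
      obtain x y n where xy: "x \<in> ball u \<rho>'" "y \<in> ball u \<rho>'" "n \<ge> 1"
        "dist (comp_from f 1 n x) (comp_from f 1 n y) > \<delta>"
        using \<delta>(2)[rule_format, of "ball u \<rho>'"] \<rho>'(1) by force
      define m where "m = n div k"
      define r where "r = n mod k"
      have nmr: "n = k*m + r" unfolding m_def r_def by simp
      have rk: "r \<le> k" unfolding r_def using assms(4) by (simp add: order_less_imp_le)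
      have eq: "comp_from f 1 n = comp_from f (1 + k*m) r \<circ> comp_from f 1 (k*m)"
        using comp_from_add[of f 1 "k*m" r] nmr by simp
      have far: "dist (comp_from f 1 (k*m) x) (comp_from f 1 (k*m) y) \<ge> \<eta>"
      proof (rule ccontr)
        assume "\<not> ?thesis"
        then have "dist (comp_from f (1 + k*m) r (comp_from f 1 (k*m) x))
                    (comp_from f (1 + k*m) r (comp_from f 1 (k*m) y)) < \<delta>"
          using \<eta>(2)[rule_format, OF rk, of "1 + k*m"] by simp
        then show False using xy(4) eq by simp
      qed
      have "m \<noteq> 0"
      proof
        assume "m = 0"
        then have "dist x y \<ge> \<eta>" using far by simp
        moreover have "dist x y < \<eta>"
        proof -
          have "dist x y \<le> dist u x + dist u y" using dist_triangle2[of x y u] by (simp add: dist_commute)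
          also have "\<dots> < \<rho>' + \<rho>'" using xy by (intro add_strict_mono) auto
          also have "\<dots> \<le> \<eta>" unfolding \<rho>'_def by linarith
          finally show ?thesis .
        qed
        ultimately show False by simp
      qed
      then have "m \<ge> 1" by simp
      moreover have "dist (comp_from (kth_iterate f k) 1 m x) (comp_from (kth_iterate f k) 1 m y) > \<eta>/2"
        unfolding comp_from_kth using far \<eta>(1) by linarith
      ultimately show "\<exists>x\<in>U. \<exists>y\<in>U. \<exists>n\<ge>1. dist (comp_from (kth_iterate f k) 1 n x) (comp_from (kth_iterate f k) 1 n y) > \<eta>/2"
        using xy \<rho>' by blast
    qed (simp add: \<eta>(1))
  qed
  have A: "na_accessible (kth_iterate f k)"
    unfolding na_accessible_def
  proof (intro allI impI)
    fix e :: real and U V :: "'a set"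
    assume e: "e > 0" and UV: "open U \<and> U \<noteq> {} \<and> open V \<and> V \<noteq> {}"
    obtain \<eta> where \<eta>: "\<eta> > 0" "\<forall>r\<le>k. \<forall>j\<ge>1. \<forall>x y. dist x y < \<eta> \<longrightarrow> dist (comp_from f j r x) (comp_from f j r y) < e"
      using EQ e by blast
    obtain x y n where xy: "x \<in> U" "y \<in> V" "n \<ge> 1"
        "dist (comp_from f 1 n x) (comp_from f 1 n y) < \<eta>"
      using K UV \<eta>(1) unfolding kato_chaotic_def na_accessible_def by blast
    define m where "m = n div k + 1"
    define r where "r = k*m - n"
    have km: "k*m = n + r" "r \<le> k"
    proof -
      have "n = k * (n div k) + n mod k" by simp
      moreover have "n mod k < k" using assms(4) by simp
      moreover have "k*m = k*(n div k) + k" unfolding m_def by (simp add: algebra_simps)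
      ultimately have "k*m \<ge> n" "k*m - n \<le> k" by linarith+
      then show "k*m = n + r" "r \<le> k" unfolding r_def by auto
    qed
    have eq: "comp_from f 1 (k*m) = comp_from f (1 + n) r \<circ> comp_from f 1 n"
      using comp_from_add[of f 1 n r] km by simp
    have "dist (comp_from f 1 (k*m) x) (comp_from f 1 (k*m) y) < e"
      using \<eta>(2) km(2) xy(4) eq by auto
    then have "dist (comp_from (kth_iterate f k) 1 m x) (comp_from (kth_iterate f k) 1 m y) < e"
      by (simp only: comp_from_kth)
    moreover have "m \<ge> 1" unfolding m_def by simp
    ultimately show "\<exists>x\<in>U. \<exists>y\<in>V. \<exists>n\<ge>1. dist (comp_from (kth_iterate f k) 1 n x) (comp_from (kth_iterate f k) 1 n y) < e"
      using xy(1,2) by blast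
  qed
  show "kato_chaotic (kth_iterate f k)" using S A unfolding kato_chaotic_def by auto
qed

end
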